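(* Let $X\subseteq\mathbb{R}^n$ be nonempty, closed and convex, and $F:\mathbb{R}^n\to\mathbb{R}^n$. Suppose (A1) $F$ is $L$-Lipschitz continuous and monotone on $\mathbb{R}^n$; (A2) the solution set $X^*$ of VI$(X,F)$ is nonempty and compact and there is $C>0$ with $\|F(x^* )\|\le C$ for all $x^*\in X^*$; (A3) there is $\alpha>0$ such that $(x-x^* )^TF(x^* )\ge\alpha\,\mathrm{dist}(x,X^* )$ for all $x\in X$ and $x^*\in X^*$. Then for any $x^*\in X^*$, $$F(x)^T(x-x^* )\ge\alpha\,\mathrm{dist}(\Pi_X(x),X^* )-C\,\mathrm{dist}(x,X)\quad\text{for all }x\in\mathbb{R}^n.$$
   Context: VI$(X,F)$: find $x^*\in X$ with $F(x^* )^T(x-x^* )\ge0$ for all $x\in X$; $X^*$ its solution set. $\Pi_X$ is Euclidean projection onto $X$ and $\mathrm{dist}(x,S)=\inf_{y\in S}\|x-y\|$. *)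

theory Defs
  imports "HOL-Analysis.Analysis"
begin

definition VI_sol :: "('a::real_inner) set \<Rightarrow> ('a \<Rightarrow> 'a) \<Rightarrow> 'a set" where
  "VI_sol X F = {xs \<in> X. \<forall>x\<in>X. F xs \<bullet> (x - xs) \<ge> 0}"

definition monotone_op :: "(('a::real_inner) \<Rightarrow> 'a) \<Rightarrow> bool" where
  "monotone_op F \<longleftrightarrow> (\<forall>x y. (F x - F y) \<bullet> (x - y) \<ge> 0)"

end

theory Submission
  imports Defs
begin

theorem lemma7:
  fixes X :: "(real^'n) set" and F :: "real^'n \<Rightarrow> real^'n"
    and L C \<alpha> :: real
  assumes "X \<noteq> {}" and "closed X" and "convex X"
    and "L-lipschitz_on UNIV F" and "monotone_op F"
    and "VI_sol X F \<noteq> {}" and "compact (VI_sol X F)"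
    and "C > 0" and "\<forall>xs\<in>VI_sol X F. norm (F xs) \<le> C"
    and "\<alpha> > 0"
    and "\<forall>x\<in>X. \<forall>xs\<in>VI_sol X F. (x - xs) \<bullet> F xs \<ge> \<alpha> * infdist x (VI_sol X F)"
    and "xs \<in> VI_sol X F"
  shows "\<forall>x. F x \<bullet> (x - xs) \<ge> \<alpha> * infdist (closest_point X x) (VI_sol X F) - C * infdist x X"
proof
  fix x
  define p where "p = closest_point X x"
  have pX: "p \<in> X" using closest_point_exists(1)[OF assms(2,1)] p_def by simp
  have dp: "dist x p = infdist x X"
  proof (rule antisym)
    show "dist x p \<le> infdist x X"
      unfolding infdist_notempty[OF assms(1)]
      by (rule cINF_greatest[OF assms(1)]) (use closest_point_exists(2)[OF assms(2,1)] p_def in auto)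
    show "infdist x X \<le> dist x p" by (rule infdist_le[OF pX])
  qed
  have xsS: "xs \<in> VI_sol X F" by fact
  have m: "(F x - F xs) \<bullet> (x - xs) \<ge> 0" using assms(5) unfolding monotone_op_def by blast
  have a: "(p - xs) \<bullet> F xs \<ge> \<alpha> * infdist p (VI_sol X F)" using assms(11) pX xsS by blast
  have "\<bar>F xs \<bullet> (x - p)\<bar> \<le> norm (F xs) * norm (x - p)" by (rule Cauchy_Schwarz_ineq2)
  also have "\<dots> \<le> C * norm (x - p)" using assms(9) xsS by (simp add: mult_right_mono)
  finally have b: "F xs \<bullet> (x - p) \<ge> - C * infdist x X" using dp by (simp add: dist_norm)
  have "F x \<bullet> (x - xs) = (F x - F xs) \<bullet> (x - xs) + (p - xs) \<bullet> F xs + F xs \<bullet> (x - p)"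
    by (simp add: inner_diff_left inner_diff_right inner_commute)
  then show "F x \<bullet> (x - xs) \<ge> \<alpha> * infdist (closest_point X x) (VI_sol X F) - C * infdist x X"
    using m a b unfolding p_def[symmetric] by linarith
qed

end
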